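(* Let $c:\mathbb{R}^{n_x}\to\mathbb{R}^m$ be a smooth function with $c(x)=(c_1(x),\dots,c_m(x))$ such that $\nabla c(x)\in\mathbb{R}^{n_x\times m}$ has rank $m$. Let $S\in\mathbb{R}^{2^m\times m}$ be a matrix whose rows are pairwise distinct and whose entries all lie in $\{-1,1\}$ (so its rows are exactly the $2^m$ sign vectors), and denote by $S_{i,\bullet}$ its $i$-th row. For $i\in\{1,\dots,2^m\}$ define $$R'_i=\{x\in\mathbb{R}^{n_x}\mid \mathrm{diag}(S_{i,\bullet})\,c(x)>0\}$$ (componentwise inequality), and define $g:\mathbb{R}^{n_x}\to\mathbb{R}^{2^m}$ by $g(x)=-S\,c(x)$, with components $g_i(x)$. Let $$R_i=\{x\in\mathbb{R}^{n_x}\mid g_i(x)<\min_{j\neq i} g_j(x)\}.$$ Then for every $i$ and every $x\in R'_i$ the following hold: (i) $g_i(x)<g_j(x)$ for all $j\neq i$; (ii) the two definitions describe the same set, i.e., $R_i=R'_i$.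
   Context: $\mathrm{diag}(v)$ denotes the diagonal matrix with the entries of the vector $v$ on its diagonal. *)

theory Defs
  imports "HOL-Analysis.Analysis"
begin

definition partial_deriv :: "'n::finite \<Rightarrow> (real^'n \<Rightarrow> real) \<Rightarrow> real^'n \<Rightarrow> real" where
  "partial_deriv i f x = (THE d. ((\<lambda>t. f (x + t *\<^sub>R axis i 1)) has_real_derivative d) (at 0))"

definition iter_partial :: "'n::finite list \<Rightarrow> (real^'n \<Rightarrow> real) \<Rightarrow> real^'n \<Rightarrow> real" where
  "iter_partial is f = foldr partial_deriv is f"

definition smooth_scalar :: "(real^'n::finite \<Rightarrow> real) \<Rightarrow> bool" where
  "smooth_scalar f \<longleftrightarrow>
     (\<forall>is. continuous_on UNIV (iter_partial is f)) \<and>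
     (\<forall>is i x. (\<lambda>t. iter_partial is f (x + t *\<^sub>R axis i 1)) differentiable (at 0))"

definition smooth_map :: "(real^'n::finite \<Rightarrow> real^'m::finite) \<Rightarrow> bool" where
  "smooth_map c \<longleftrightarrow> (\<forall>j. smooth_scalar (\<lambda>x. c x $ j))"

text \<open>Gradient (transposed Jacobian) \<nabla>c(x) \<in> R^{n_x \<times> m}: entry (k,j) = d c_j / d x_k.\<close>
definition grad :: "(real^'n::finite \<Rightarrow> real^'m::finite) \<Rightarrow> real^'n \<Rightarrow> real^'m^'n" where
  "grad c x = (\<chi> k j. partial_deriv k (\<lambda>y. c y $ j) x)"

definition diag :: "real^'m::finite \<Rightarrow> real^'m^'m" where
  "diag v = (\<chi> a b. if a = b then v $ a else 0)"

end

theory Submission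
  imports Defs
begin

lemma diag_mult_nth: "(diag v *v y) $ a = v $ a * y $ a"
proof -
  have "(diag v *v y) $ a = (\<Sum>j\<in>UNIV. (if j = a then v$a * y$j else 0))"
    unfolding diag_def matrix_vector_mult_def by (simp only: vec_lambda_beta) (rule sum.cong, auto)
  also have "\<dots> = v $ a * y $ a" by (simp add: sum.delta)
  finally show ?thesis .
qed

lemma flip_exists:
  fixes S :: "real^'m::finite^'k::finite"
  assumes card_rows: "CARD('k) = 2 ^ CARD('m)"
    and rows_distinct: "inj (\<lambda>i. S $ i)"
    and entries: "\<forall>i j. S $ i $ j \<in> {-1, 1}"
  shows "\<exists>k. S $ k = (\<chi> l. if l = j then - S$i$j else S$i$l)"
proof -
  define V where "V = {v :: real^'m. \<forall>l. v $ l \<in> {-1,1}}"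
  have V_eq: "V = vec_lambda ` (PiE UNIV (\<lambda>_. {-1,1::real}))"
  proof
    show "V \<subseteq> vec_lambda ` (PiE UNIV (\<lambda>_. {-1,1::real}))"
    proof
      fix v assume "v \<in> V"
      then have "vec_nth v \<in> PiE UNIV (\<lambda>_. {-1,1::real})" unfolding V_def by auto
      moreover have "v = vec_lambda (vec_nth v)" by simp
      ultimately show "v \<in> vec_lambda ` (PiE UNIV (\<lambda>_. {-1,1::real}))" by blast
    qed
  qed (auto simp: V_def PiE_def)
  have finV: "finite V" unfolding V_eq by (intro finite_imageI finite_PiE) auto
  have cardV: "card V \<le> 2 ^ CARD('m)"
  proof -
    have "card V \<le> card (PiE (UNIV::'m set) (\<lambda>_. {-1,1::real}))"
      unfolding V_eq by (rule card_image_le) (intro finite_PiE, auto)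
    also have "\<dots> = 2 ^ CARD('m)" by (simp add: card_PiE numeral_2_eq_2)
    finally show ?thesis .
  qed
  have sub: "range (\<lambda>i. S $ i) \<subseteq> V" using entries by (auto simp: V_def)
  have cim: "card (range (\<lambda>i. S $ i)) = CARD('k)"
    using rows_distinct by (simp add: card_image)
  have "range (\<lambda>i. S $ i) = V"
    using card_subset_eq[OF finV sub] cim cardV card_rows card_mono[OF finV sub] by simp
  moreover have "(\<chi> l. if l = j then - S$i$j else S$i$l) \<in> V"
    using entries by (auto simp: V_def)
  ultimately obtain k where "(\<chi> l. if l = j then - S$i$j else S$i$l) = S $ k"
    by (metis rangeE)
  then show ?thesis by metis
qed

lemma term_le:
  fixes s t y :: real
  assumes "s \<in> {-1,1}" "t \<in> {-1,1}" "s * y > 0"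
  shows "t * y \<le> s * y" "t \<noteq> s \<Longrightarrow> t * y < s * y"
  using assms by auto

theorem proposition1:
  fixes c :: "real^'n::finite \<Rightarrow> real^'m::finite"
    and S :: "real^'m^'k::finite"
    and R' R :: "'k \<Rightarrow> (real^'n) set"
    and g :: "real^'n \<Rightarrow> real^'k"
  assumes smooth: "smooth_map c"
    and rank_grad: "\<forall>x. rank (grad c x) = CARD('m)"
    and card_rows: "CARD('k) = 2 ^ CARD('m)"
    and rows_distinct: "inj (\<lambda>i. S $ i)"
    and entries: "\<forall>i j. S $ i $ j \<in> {-1, 1}"
    and R'_def: "\<forall>i. R' i = {x. \<forall>j. (diag (S $ i) *v c x) $ j > 0}"
    and g_def: "\<forall>x. g x = - (S *v c x)"
    and R_def: "\<forall>i. R i = {x. g x $ i < Min {g x $ j | j. j \<noteq> i}}"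
  shows "\<forall>i. \<forall>x\<in>R' i. (\<forall>j. j \<noteq> i \<longrightarrow> g x $ i < g x $ j) \<and> R i = R' i"
proof -
  have gx: "\<And>x k. g x $ k = - (\<Sum>l\<in>UNIV. S$k$l * c x $ l)"
    using g_def by (simp add: matrix_vector_mult_def)
  have R'm: "\<And>i x. x \<in> R' i \<longleftrightarrow> (\<forall>j. S$i$j * c x $ j > 0)"
    using R'_def by (simp add: diag_mult_nth)
  have part1: "g x $ i < g x $ j" if "x \<in> R' i" "j \<noteq> i" for x i j
  proof -
    have pos: "\<forall>l. S$i$l * c x $ l > 0" using that R'm by blast
    have "S $ j \<noteq> S $ i" using rows_distinct that(2) by (meson injD)
    then obtain l0 where l0: "S$j$l0 \<noteq> S$i$l0" by (metis vec_eq_iff)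
    have "(\<Sum>l\<in>UNIV. S$j$l * c x $ l) < (\<Sum>l\<in>UNIV. S$i$l * c x $ l)"
    proof (rule sum_strict_mono_ex1)
      show "\<forall>l\<in>UNIV. S$j$l * c x $ l \<le> S$i$l * c x $ l"
        using term_le(1) entries pos by blast
      show "\<exists>l\<in>UNIV. S$j$l * c x $ l < S$i$l * c x $ l"
        using term_le(2) entries pos l0 by blast
    qed simp
    then show ?thesis by (simp add: gx)
  qed
  have flip: "\<exists>k. k \<noteq> i \<and> g x $ k = g x $ i + 2 * S$i$j * c x $ j" for x i j
  proof -
    obtain k where k: "S $ k = (\<chi> l. if l = j then - S$i$j else S$i$l)"
      using flip_exists[OF card_rows rows_distinct entries] by blast
    have "S$i$j \<noteq> 0" using entries by (metis insert_iff singletonD zero_neq_neg_one zero_neq_one)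
    moreover have "S$k$j = - S$i$j" using k by simp
    ultimately have "k \<noteq> i" by auto
    moreover have "(\<Sum>l\<in>UNIV. S$k$l * c x $ l) = (\<Sum>l\<in>UNIV. S$i$l * c x $ l + (if l = j then -2*S$i$j*c x$j else 0))"
      by (rule sum.cong) (auto simp: k)
    then have "(\<Sum>l\<in>UNIV. S$k$l * c x $ l) = (\<Sum>l\<in>UNIV. S$i$l * c x $ l) - 2*S$i$j*c x$j"
      by (simp add: sum.distrib)
    ultimately show ?thesis by (auto simp: gx)
  qed
  have Rm: "x \<in> R i \<longleftrightarrow> (\<forall>k. k \<noteq> i \<longrightarrow> g x $ i < g x $ k)" for x i
  proof -
    have fin: "finite {g x $ j | j. j \<noteq> i}" by simp
    have ne: "{g x $ j | j. j \<noteq> i} \<noteq> {}" using flip[of i x undefined] by blast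
    show ?thesis using R_def Min_gr_iff[OF fin ne] by auto
  qed
  have "R i = R' i" for i
  proof
    show "R' i \<subseteq> R i" using part1 Rm by blast
    show "R i \<subseteq> R' i"
    proof
      fix x assume x: "x \<in> R i"
      show "x \<in> R' i" unfolding R'm
      proof (rule ccontr)
        assume "\<not> (\<forall>j. S$i$j * c x $ j > 0)"
        then obtain j where "S$i$j * c x $ j \<le> 0" by (auto simp: not_less)
        moreover obtain k where "k \<noteq> i" "g x $ k = g x $ i + 2 * S$i$j * c x $ j"
          using flip by blast
        moreover have "g x $ i < g x $ k" using x Rm \<open>k \<noteq> i\<close> by blast
        ultimately show False by (simp add: mult.assoc)
      qed
    qed
  qed
  then show ?thesis using part1 by blast
qed

end
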